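(* Consider the generalized one-way trading problem (GOT) with capacity $C>0$ and bounds $0<L\le U$, $\theta:=U/L$, under Assumption A. Let $\alpha^*:=1+\ln\theta$, $\beta^*:=C/\alpha^*$, and define the threshold function $$\phi^*(w)=\begin{cases} L & w\in[0,\beta^* ),\\ L\,e^{(1+\ln\theta)w/C-1} & w\in[\beta^*,C],\\ +\infty & w>C.\end{cases}$$ Then the online threshold-based algorithm $\mathsf{OTA}_{\phi^*}$ for GOT has competitive ratio $1+\ln\theta$.
   Context: GOT: a single knapsack of capacity $C$; items $n=1,\dots,N$ arrive one at a time. Item $n$ has a size $D_n>0$ and a value function $g_n:[0,D_n]\to\mathbb{R}_{\ge0}$, revealed on arrival. The offline problem is $\max\sum_n g_n(y_n)$ subject to $\sum_n y_n\le C$, $0\le y_n\le D_n$. Assumption A: each $g_n$ is non-decreasing, differentiable and concave, $g_n(0)=0$, and $L\le g_n'\le U$ on $[0,D_n]$, where $L,U$ (and $C$) are known in advance. An online algorithm irrevocably chooses $y_n$ upon arrival of item $n$ using only items $1,\dots,n$ and $C,L,U$, keeping the constraints feasible. Its competitive ratio is $\sup_{\mathcal I}\mathrm{OPT}(\mathcal I)/\mathrm{ALG}(\mathcal I)$ over all instances satisfying Assumption A, where OPT is the offline optimum and ALG the value obtained by the algorithm; it is $\alpha$-competitive if this is at most $\alpha$. A threshold function is a non-decreasing $\phi:[0,C]\to\mathbb{R}$, extended by $\phi(w)=+\infty$ for $w>C$. $\mathsf{OTA}_\phi$: start with utilization $w^{(1)}=0$; upon arrival of item $n$ choose $y_n^*\in\arg\max_{0\le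 y\le D_n}\, g_n(y)-\int_{w^{(n)}}^{w^{(n)}+y}\phi(u)\,du$ and set $w^{(n+1)}=w^{(n)}+y_n^*$. *)

theory Defs
  imports "HOL-Analysis.Analysis"
begin

text \<open>An item is a pair (D, g): size D and value function g.
  An instance is a finite list of items, in arrival order.\<close>

type_synonym item = "real \<times> (real \<Rightarrow> real)"

text \<open>Assumption A for a single item, given the known bounds L, U.
  Differentiability on the closed interval [0,D] is taken one-sidedly at the endpoints
  (derivative within [0,D]).\<close>
definition assumption_A :: "real \<Rightarrow> real \<Rightarrow> item \<Rightarrow> bool" where
  "assumption_A L U it \<longleftrightarrow>
     (let D = fst it; g = snd it in
        D > 0 \<and> g 0 = 0 \<and> mono_on {0..D} g \<and> concave_on {0..D} g \<and>
        (\<exists>g'. \<forall>y\<in>{0..D}. (g has_real_derivative g' y) (at y within {0..D}) \<and>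
                             L \<le> g' y \<and> g' y \<le> U))"

definition valid_instance :: "real \<Rightarrow> real \<Rightarrow> item list \<Rightarrow> bool" where
  "valid_instance L U items \<longleftrightarrow> (\<forall>it\<in>set items. assumption_A L U it)"

definition total_value :: "item list \<Rightarrow> real list \<Rightarrow> real" where
  "total_value items ys = sum_list (map (\<lambda>(it, y). snd it y) (zip items ys))"

definition feasible_alloc :: "real \<Rightarrow> item list \<Rightarrow> real list \<Rightarrow> bool" where
  "feasible_alloc C items ys \<longleftrightarrow>
     length ys = length items \<and>
     (\<forall>i<length items. 0 \<le> ys ! i \<and> ys ! i \<le> fst (items ! i)) \<and>
     sum_list ys \<le> C"

definition OPT :: "real \<Rightarrow> item list \<Rightarrow> real" where
  "OPT C items = Sup {total_value items ys | ys. feasible_alloc C items ys}"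

text \<open>Since the threshold is
  extended by +\<infinity> beyond C, any y with w + y > C has pseudo-utility -\<infinity>, so only
  y with w + y \<le> C are admissible (y = 0 always is).\<close>
definition ota_argmax :: "real \<Rightarrow> (real \<Rightarrow> real) \<Rightarrow> real \<Rightarrow> item \<Rightarrow> real \<Rightarrow> bool" where
  "ota_argmax C phi w it y \<longleftrightarrow>
     0 \<le> y \<and> y \<le> fst it \<and> w + y \<le> C \<and>
     (\<forall>z. 0 \<le> z \<and> z \<le> fst it \<and> w + z \<le> C \<longrightarrow>
          snd it z - integral {w..w+z} phi \<le> snd it y - integral {w..w+y} phi)"

text \<open>Tie-breaking convention: the largest maximizer is chosen.\<close>
definition ota_choice :: "real \<Rightarrow> (real \<Rightarrow> real) \<Rightarrow> real \<Rightarrow> item \<Rightarrow> real" where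
  "ota_choice C phi w it = (GREATEST y. ota_argmax C phi w it y)"

fun ota_run :: "real \<Rightarrow> (real \<Rightarrow> real) \<Rightarrow> real \<Rightarrow> item list \<Rightarrow> real list" where
  "ota_run C phi w [] = []"
| "ota_run C phi w (it # its) =
     (let y = ota_choice C phi w it in y # ota_run C phi (w + y) its)"

definition ALG_OTA :: "real \<Rightarrow> (real \<Rightarrow> real) \<Rightarrow> item list \<Rightarrow> real" where
  "ALG_OTA C phi items = total_value items (ota_run C phi 0 items)"

text \<open>Competitive ratio: sup over all valid instances of OPT/ALG, computed in the extended
  reals (so a positive OPT with ALG = 0 gives +\<infinity>, and 0/0 = 0).\<close>
definition competitive_ratio_OTA :: "real \<Rightarrow> real \<Rightarrow> real \<Rightarrow> (real \<Rightarrow> real) \<Rightarrow> ereal" where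
  "competitive_ratio_OTA C L U phi =
     (SUP items \<in> {items. valid_instance L U items}.
        ereal (OPT C items) / ereal (ALG_OTA C phi items))"

text \<open>The threshold function phi* on [0,C] (values beyond C are never used, see ota_argmax).\<close>
definition phi_star :: "real \<Rightarrow> real \<Rightarrow> real \<Rightarrow> real \<Rightarrow> real" where
  "phi_star C L U w =
     (let \<alpha> = 1 + ln (U / L); \<beta> = C / \<alpha> in
        if w < \<beta> then L else L * exp (\<alpha> * w / C - 1))"

end

theory Submission
  imports Defs
begin

definition al :: "real \<Rightarrow> real \<Rightarrow> real" where "al L U = 1 + ln (U / L)"
definition be :: "real \<Rightarrow> real \<Rightarrow> real \<Rightarrow> real" where "be C L U = C / al L U"
definition PP :: "real \<Rightarrow> real \<Rightarrow> real \<Rightarrow> real \<Rightarrow> real" where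
  "PP C L U u = L * min u (be C L U) + be C L U * L * (exp (max (al L U * u / C - 1) 0) - 1)"

locale got =
  fixes C L U :: real
  assumes Cpos: "C > 0" and Lpos: "0 < L" and LU: "L \<le> U"
begin

abbreviation "\<alpha> \<equiv> al L U"
abbreviation "\<beta> \<equiv> be C L U"
abbreviation "\<phi> \<equiv> phi_star C L U"
abbreviation "P \<equiv> PP C L U"

lemma al_ge1: "\<alpha> \<ge> 1"
  using Lpos LU by (simp add: al_def)

lemma al_pos: "\<alpha> > 0" using al_ge1 by simp

lemma be_pos: "\<beta> > 0" using al_pos Cpos by (simp add: be_def)

lemma be_le_C: "\<beta> \<le> C" using al_ge1 Cpos by (simp add: be_def field_simps)

lemma al_be: "\<alpha> * \<beta> = C" using al_pos by (simp add: be_def)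

lemma lt_be_iff: "u < \<beta> \<longleftrightarrow> \<alpha> * u / C - 1 < 0"
  using al_pos Cpos by (simp add: be_def field_simps)

lemma phi_alt: "\<phi> u = L * exp (max (\<alpha> * u / C - 1) 0)"
  using lt_be_iff[of u] by (simp add: phi_star_def al_def be_def Let_def max_def)

lemma phi_mono: "a \<le> b \<Longrightarrow> \<phi> a \<le> \<phi> b"
proof -
  assume "a \<le> b"
  then have "\<alpha> * a / C \<le> \<alpha> * b / C" using al_pos Cpos
    by (simp add: divide_right_mono)
  then show ?thesis using Lpos unfolding phi_alt by simp
qed

lemma phi_ge_L: "\<phi> u \<ge> L"
  using Lpos unfolding phi_alt by simp

lemma phi_C: "\<phi> C = U"
proof -
  have "\<alpha> * C / C - 1 = ln (U / L)" using Cpos by (simp add: al_def)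
  moreover have "ln (U/L) \<ge> 0" using Lpos LU by simp
  ultimately show ?thesis using Lpos LU unfolding phi_alt by simp
qed

lemma phi_cont: "continuous_on S \<phi>"
  using Cpos unfolding phi_alt by (intro continuous_intros) auto

lemma P_cont: "continuous_on S P"
  using Cpos unfolding PP_def by (intro continuous_intros) auto

lemma P_zero: "P 0 = 0"
  using be_pos Cpos by (simp add: PP_def)

lemma P_below: "u \<le> \<beta> \<Longrightarrow> P u = L * u"
  using lt_be_iff[of u] al_be by (auto simp: PP_def max_def)

lemma P_above: "u \<ge> \<beta> \<Longrightarrow> P u = \<beta> * \<phi> u"
proof -
  assume u: "u \<ge> \<beta>"
  then have "min u \<beta> = \<beta>" "max (\<alpha> * u / C - 1) 0 = \<alpha> * u / C - 1"
    using lt_be_iff[of u] by auto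
  then show ?thesis unfolding PP_def phi_alt by (simp add: algebra_simps)
qed

lemma phi_below: "u \<le> \<beta> \<Longrightarrow> \<phi> u = L"
  using lt_be_iff[of u] al_be Cpos unfolding phi_alt by (auto simp: max_def)

lemma phi_above: "u \<ge> \<beta> \<Longrightarrow> \<phi> u = L * exp (\<alpha> * u / C - 1)"
  using lt_be_iff[of u] unfolding phi_alt by (auto simp: max_def)

lemma int_below: "a \<le> b \<Longrightarrow> b \<le> \<beta> \<Longrightarrow> (\<phi> has_integral (P b - P a)) {a..b}"
proof -
  assume ab: "a \<le> b" "b \<le> \<beta>"
  have "((\<lambda>x. L) has_integral (P b - P a)) {a..b}"
    using ab has_integral_const_real[of L a b] by (simp add: P_below algebra_simps)
  then show ?thesis
    by (rule has_integral_eq[rotated]) (use ab in \<open>auto simp: phi_below\<close>)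
qed

lemma int_above: "a \<le> b \<Longrightarrow> \<beta> \<le> a \<Longrightarrow> (\<phi> has_integral (P b - P a)) {a..b}"
proof -
  assume ab: "a \<le> b" "\<beta> \<le> a"
  define f where "f u = \<beta> * L * exp (\<alpha> * u / C - 1)" for u
  have "(f has_vector_derivative \<phi> x) (at x within {a..b})" if "x \<in> {a..b}" for x
  proof -
    have "(f has_real_derivative \<beta> * L * (exp (\<alpha> * x / C - 1) * (\<alpha> / C))) (at x within {a..b})"
      unfolding f_def using Cpos by (auto intro!: derivative_eq_intros)
    moreover have "\<beta> * L * (exp (\<alpha> * x / C - 1) * (\<alpha> / C)) = \<phi> x"
      using that ab al_be Cpos by (simp add: phi_above field_simps)
    ultimately show ?thesis by (simp add: has_real_derivative_iff_has_vector_derivative)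
  qed
  then have "(\<phi> has_integral (f b - f a)) {a..b}"
    by (intro fundamental_theorem_of_calculus ab)
  moreover have "f b = P b" "f a = P a" using ab Cpos
    by (simp_all add: P_above phi_above f_def)
  ultimately show ?thesis by simp
qed

lemma phi_int: "a \<le> b \<Longrightarrow> (\<phi> has_integral (P b - P a)) {a..b}"
proof -
  assume ab: "a \<le> b"
  show ?thesis
  proof (cases "b \<le> \<beta>")
    case True then show ?thesis using int_below ab by simp
  next
    case False
    show ?thesis
    proof (cases "\<beta> \<le> a")
      case True then show ?thesis using int_above ab by simp
    next
      case F2: False
      have "(\<phi> has_integral ((P \<beta> - P a) + (P b - P \<beta>))) {a..b}"
        by (rule has_integral_combine[of a \<beta> b]) (use False F2 int_below int_above in auto)
      then show ?thesis by simp
    qed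
  qed
qed

lemma integral_phi: "a \<le> b \<Longrightarrow> integral {a..b} \<phi> = P b - P a"
  using phi_int by (rule integral_unique)

lemma P_diff_bounds: "a \<le> b \<Longrightarrow> \<phi> a * (b - a) \<le> P b - P a \<and> P b - P a \<le> \<phi> b * (b - a)"
proof -
  assume ab: "a \<le> b"
  have c1: "((\<lambda>x. \<phi> a) has_integral (\<phi> a * (b - a))) {a..b}"
    using has_integral_const_real[of "\<phi> a" a b] ab by (simp add: mult.commute)
  have c2: "((\<lambda>x. \<phi> b) has_integral (\<phi> b * (b - a))) {a..b}"
    using has_integral_const_real[of "\<phi> b" a b] ab by (simp add: mult.commute)
  show ?thesis
    using has_integral_le[OF c1 phi_int[OF ab]] has_integral_le[OF phi_int[OF ab] c2]
    by (auto intro: phi_mono)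
qed

lemma g_slope:
  assumes A: "assumption_A L U (D, g)" and ab: "0 \<le> a" "a \<le> b" "b \<le> D"
  shows "L * (b - a) \<le> g b - g a" "g b - g a \<le> U * (b - a)"
proof -
  from A obtain g' where g'': "\<forall>y\<in>{0..D}. (g has_real_derivative g' y) (at y within {0..D}) \<and> L \<le> g' y \<and> g' y \<le> U"
    unfolding assumption_A_def Let_def by auto
  note g' = g''[rule_format]
  have cont: "continuous_on {0..D} g"
    by (rule DERIV_continuous_on) (use g' in blast)
  then have contab: "continuous_on {a..b} g"
    by (rule continuous_on_subset) (use ab in auto)
  have der: "(g has_real_derivative g' x) (at x) \<and> L \<le> g' x \<and> g' x \<le> U" if "a < x" "x < b" for x
  proof -
    have "x \<in> interior {0..D}" using that ab by auto
    then show ?thesis using g'[of x] that ab at_within_interior[of x "{0..D}"] by auto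
  qed
  have "(\<lambda>y. g y - L * y) a \<le> (\<lambda>y. g y - L * y) b"
  proof (rule DERIV_nonneg_imp_increasing_open[OF ab(2)])
    fix x assume "a < x" "x < b"
    then show "\<exists>y. ((\<lambda>y. g y - L * y) has_real_derivative y) (at x) \<and> 0 \<le> y"
      using der[of x] by (intro exI[of _ "g' x - L"]) (auto intro!: derivative_eq_intros)
  next
    show "continuous_on {a..b} (\<lambda>y. g y - L * y)" using contab by (intro continuous_intros)
  qed
  then show "L * (b - a) \<le> g b - g a" by (simp add: algebra_simps)
  have "(\<lambda>y. g y - U * y) b \<le> (\<lambda>y. g y - U * y) a"
  proof (rule DERIV_nonpos_imp_decreasing_open[OF ab(2)])
    fix x assume "a < x" "x < b"
    then show "\<exists>y. ((\<lambda>y. g y - U * y) has_real_derivative y) (at x) \<and> y \<le> 0"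
      using der[of x] by (intro exI[of _ "g' x - U"]) (auto intro!: derivative_eq_intros)
  next
    show "continuous_on {a..b} (\<lambda>y. g y - U * y)" using contab by (intro continuous_intros)
  qed
  then show "g b - g a \<le> U * (b - a)" by (simp add: algebra_simps)
qed

lemma g_cont:
  assumes A: "assumption_A L U (D, g)"
  shows "continuous_on {0..D} g"
proof -
  from A obtain g' where g'': "\<forall>y\<in>{0..D}. (g has_real_derivative g' y) (at y within {0..D}) \<and> L \<le> g' y \<and> g' y \<le> U"
    unfolding assumption_A_def Let_def by auto
  note g' = g''[rule_format]
  show ?thesis by (rule DERIV_continuous_on) (use g' in blast)
qed

lemma argmax_iff:
  assumes "0 \<le> w"
  shows "ota_argmax C \<phi> w (D, g) y \<longleftrightarrow>
    (0 \<le> y \<and> y \<le> D \<and> w + y \<le> C \<and>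
     (\<forall>z. 0 \<le> z \<and> z \<le> D \<and> w + z \<le> C \<longrightarrow> g z - (P (w + z) - P w) \<le> g y - (P (w + y) - P w)))"
  unfolding ota_argmax_def by (auto simp: integral_phi)

lemma choice:
  assumes A: "assumption_A L U (D, g)" and w: "0 \<le> w" "w \<le> C"
  shows "ota_argmax C \<phi> w (D, g) (ota_choice C \<phi> w (D, g))"
    "\<And>z. ota_argmax C \<phi> w (D, g) z \<Longrightarrow> z \<le> ota_choice C \<phi> w (D, g)"
proof -
  define m where "m = min D (C - w)"
  have Dpos: "D > 0" using A by (simp add: assumption_A_def)
  have m0: "0 \<le> m" using Dpos w by (simp add: m_def)
  define F where "F y = g y - (P (w + y) - P w)" for y
  have contF: "continuous_on {0..m} F"
  proof -
    have "continuous_on {0..m} g"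
      by (rule continuous_on_subset[OF g_cont[OF A]]) (auto simp: m_def)
    moreover have "continuous_on {0..m} (\<lambda>y. P (w + y))"
      using Cpos unfolding PP_def by (intro continuous_intros) auto
    ultimately show ?thesis unfolding F_def by (intro continuous_intros)
  qed
  obtain y0 where y0: "y0 \<in> {0..m}" "\<And>z. z \<in> {0..m} \<Longrightarrow> F z \<le> F y0"
    using continuous_attains_sup[OF compact_Icc _ contF] m0 by auto
  define S where "S = {y \<in> {0..m}. F y = F y0}"
  have "closed S" unfolding S_def by (rule continuous_closed_preimage_constant[OF contF]) simp
  moreover have "bounded S" by (rule bounded_subset[of "{0..m}"]) (auto simp: S_def)
  ultimately have "compact S" by (simp add: compact_eq_bounded_closed)
  moreover have "S \<noteq> {}" using y0 by (auto simp: S_def)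
  ultimately obtain ym where ym: "ym \<in> S" "\<And>z. z \<in> S \<Longrightarrow> z \<le> ym"
    using continuous_attains_sup[of S "\<lambda>x. x"] by (auto intro: continuous_intros)
  have iff: "ota_argmax C \<phi> w (D, g) y \<longleftrightarrow> y \<in> {0..m} \<and> (\<forall>z\<in>{0..m}. F z \<le> F y)" for y
    unfolding argmax_iff[OF w(1)] F_def m_def by auto
  have P1: "ota_argmax C \<phi> w (D, g) ym"
    unfolding iff using ym y0 by (auto simp: S_def)
  have P2: "z \<le> ym" if "ota_argmax C \<phi> w (D, g) z" for z
  proof -
    have "z \<in> {0..m}" "F y0 \<le> F z" using that y0 unfolding iff by auto
    moreover have "F z \<le> F y0" using y0 calculation by auto
    ultimately have "z \<in> S" by (auto simp: S_def)
    then show ?thesis using ym by auto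
  qed
  have eq: "ota_choice C \<phi> w (D, g) = ym"
    unfolding ota_choice_def by (rule Greatest_equality[where P="ota_argmax C \<phi> w (D, g)", OF P1 P2])
  show "ota_argmax C \<phi> w (D, g) (ota_choice C \<phi> w (D, g))" using P1 eq by simp
  show "\<And>z. ota_argmax C \<phi> w (D, g) z \<Longrightarrow> z \<le> ota_choice C \<phi> w (D, g)" using P2 eq by simp
qed

lemma concave_chord:
  assumes A: "assumption_A L U (D, g)" and yx: "0 \<le> y" "y < x" "x \<le> D" and t: "0 < t" "t \<le> x - y"
  shows "g y + t * ((g x - g y) / (x - y)) \<le> g (y + t)"
proof -
  have cc: "concave_on {0..D} g" using A by (simp add: assumption_A_def)
  define th where "th = t / (x - y)"
  have th: "0 \<le> th" "th \<le> 1" using yx t by (auto simp: th_def field_simps)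
  have "- g ((1 - th) *\<^sub>R y + th *\<^sub>R x) \<le> (1 - th) * (- g y) + th * (- g x)"
    using cc th yx unfolding concave_on_def convex_on_def
    by (elim conjE) (drule bspec[of _ _ y], simp, drule bspec[of _ _ x], simp, simp)
  moreover have "(1 - th) *\<^sub>R y + th *\<^sub>R x = y + th * (x - y)" by (simp add: algebra_simps)
  moreover have "th * (x - y) = t" using yx by (simp add: th_def)
  moreover have "(1 - th) * g y + th * g x = g y + th * (g x - g y)" by (simp add: algebra_simps)
  moreover have "th * (g x - g y) = t * ((g x - g y) / (x - y))" by (simp add: th_def)
  ultimately show ?thesis by simp
qed

lemma pi1:
  assumes A: "assumption_A L U (D, g)" and w: "0 \<le> w" "w \<le> C"
    and y: "y = ota_choice C \<phi> w (D, g)" and lam: "\<phi> (w + y) \<le> lam"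
    and x: "0 \<le> x" "x \<le> D"
  shows "g x - lam * x \<le> g y - (P (w + y) - P w)"
proof -
  have am: "ota_argmax C \<phi> w (D, g) y" using choice(1)[OF A w] y by simp
  then have yb: "0 \<le> y" "y \<le> D" "w + y \<le> C" and
    opt: "\<And>z. 0 \<le> z \<Longrightarrow> z \<le> D \<Longrightarrow> w + z \<le> C \<Longrightarrow> g z - (P (w + z) - P w) \<le> g y - (P (w + y) - P w)"
    unfolding argmax_iff[OF w(1)] by auto
  have Py: "P (w + y) - P w \<le> lam * y"
  proof -
    have "P (w + y) - P w \<le> \<phi> (w + y) * y" using P_diff_bounds[of w "w + y"] yb by simp
    also have "\<dots> \<le> lam * y" using lam yb by (simp add: mult_right_mono)
    finally show ?thesis .
  qed
  show ?thesis
  proof (cases "x \<le> y")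
    case True
    have "P (w + x) - P w \<le> \<phi> (w + x) * x" using P_diff_bounds[of w "w + x"] x by simp
    also have "\<dots> \<le> lam * x" using lam x True phi_mono[of "w + x" "w + y"]
      by (intro mult_right_mono) auto
    finally have "P (w + x) - P w \<le> lam * x" .
    moreover have "g x - (P (w + x) - P w) \<le> g y - (P (w + y) - P w)"
      using opt[of x] x True yb by auto
    ultimately show ?thesis by linarith
  next
    case False
    have key: "g x - g y \<le> lam * (x - y)"
    proof (cases "w + y = C")
      case True
      then have "U \<le> lam" using lam phi_C by simp
      moreover have "g x - g y \<le> U * (x - y)" using g_slope(2)[OF A, of y x] yb x False by simp
      ultimately show ?thesis using False by (smt (verit) mult_right_mono)
    next
      case wC: False
      define v where "v = w + y"
      have vC: "v < C" using wC yb by (simp add: v_def)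
      have "g x - g y \<le> \<phi> v * (x - y)"
      proof (rule ccontr)
        assume nt: "\<not> g x - g y \<le> \<phi> v * (x - y)"
        define s where "s = (g x - g y) / (x - y)"
        have sgt: "s > \<phi> v" using nt False by (simp add: s_def field_simps)
        have "isCont \<phi> v"
          using phi_cont[of UNIV] continuous_on_eq_continuous_at[of UNIV] by auto
        then have "\<phi> \<midarrow>v\<rightarrow> \<phi> v" by (simp add: isCont_def)
        from LIM_D[OF this, of "s - \<phi> v"] sgt obtain d where d: "d > 0"
          "\<And>u. u \<noteq> v \<and> norm (u - v) < d \<Longrightarrow> norm (\<phi> u - \<phi> v) < s - \<phi> v" by auto
        define t where "t = min (d / 2) (min (x - y) (C - v))"
        have t: "0 < t" "t \<le> x - y" "t \<le> C - v" "t < d" using d False vC by (auto simp: t_def)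
        have "norm (\<phi> (v + t) - \<phi> v) < s - \<phi> v" using d(2)[of "v + t"] t by auto
        then have phit: "\<phi> (v + t) < s" by simp
        have "P (v + t) - P v \<le> \<phi> (v + t) * t" using P_diff_bounds[of v "v + t"] t by simp
        also have "\<dots> < s * t" using phit t by simp
        finally have Pt: "P (v + t) - P v < s * t" .
        have gc: "g y + t * s \<le> g (y + t)"
          using concave_chord[OF A yb(1) _ x(2) t(1) t(2)] False by (simp add: s_def)
        have "g (y + t) - (P (w + (y + t)) - P w) \<le> g y - (P (w + y) - P w)"
          using opt[of "y + t"] t yb x by (auto simp: v_def)
        then show False using Pt gc by (simp add: v_def algebra_simps)
      qed
      also have "\<phi> v * (x - y) \<le> lam * (x - y)"
        using lam False by (intro mult_right_mono) (auto simp: v_def)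
      finally show ?thesis .
    qed
    then show ?thesis using Py by (simp add: algebra_simps)
  qed
qed

lemma pi2:
  assumes A: "assumption_A L U (D, g)" and w: "0 \<le> w" "w \<le> C"
    and y: "y = ota_choice C \<phi> w (D, g)" and lt: "w + y < \<beta>"
  shows "y = D"
proof (rule ccontr)
  assume ne: "y \<noteq> D"
  have am: "ota_argmax C \<phi> w (D, g) y" using choice(1)[OF A w] y by simp
  then have yb: "0 \<le> y" "y \<le> D" "w + y \<le> C" and
    opt: "\<And>z. 0 \<le> z \<Longrightarrow> z \<le> D \<Longrightarrow> w + z \<le> C \<Longrightarrow> g z - (P (w + z) - P w) \<le> g y - (P (w + y) - P w)"
    unfolding argmax_iff[OF w(1)] by auto
  define z where "z = min D (\<beta> - w)"
  have z: "y < z" "z \<le> D" "w + z \<le> \<beta>" "0 \<le> z" using ne yb lt by (auto simp: z_def)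
  have "L * (z - y) \<le> g z - g y" using g_slope(1)[OF A, of y z] yb z by simp
  moreover have "P (w + z) = L * (w + z)" "P (w + y) = L * (w + y)"
    using z lt by (auto intro!: P_below)
  ultimately have ge: "g y - (P (w + y) - P w) \<le> g z - (P (w + z) - P w)"
    by (simp add: algebra_simps)
  have "ota_argmax C \<phi> w (D, g) z"
    unfolding argmax_iff[OF w(1)] using z be_le_C opt ge by fastforce
  then have "z \<le> y" using choice(2)[OF A w] y by simp
  then show False using z by simp
qed

lemma tv_cons: "total_value ((D, g) # its) (x # xs) = g x + total_value its xs"
  by (simp add: total_value_def)

definition okx :: "item list \<Rightarrow> real list \<Rightarrow> bool" where
  "okx items xs \<longleftrightarrow> length xs = length items \<and> (\<forall>i<length items. 0 \<le> xs ! i \<and> xs ! i \<le> fst (items ! i))"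

lemma okx_cons: "okx ((D, g) # its) xs \<longleftrightarrow> (\<exists>x xs'. xs = x # xs' \<and> 0 \<le> x \<and> x \<le> D \<and> okx its xs')"
proof
  assume "okx ((D, g) # its) xs"
  then obtain x xs' where xs: "xs = x # xs'" unfolding okx_def by (cases xs) auto
  with \<open>okx ((D, g) # its) xs\<close> show "\<exists>x xs'. xs = x # xs' \<and> 0 \<le> x \<and> x \<le> D \<and> okx its xs'"
    unfolding okx_def by (auto intro!: exI[of _ x] exI[of _ xs'] dest: spec[of _ 0] spec[of _ "Suc _"])
next
  assume "\<exists>x xs'. xs = x # xs' \<and> 0 \<le> x \<and> x \<le> D \<and> okx its xs'"
  then show "okx ((D, g) # its) xs" unfolding okx_def by (auto simp: nth_Cons split: nat.split)
qed

lemma run_main: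
  assumes "valid_instance L U items" "0 \<le> w" "w \<le> C"
  shows "w \<le> w + sum_list (ota_run C \<phi> w items) \<and> w + sum_list (ota_run C \<phi> w items) \<le> C \<and>
    (\<forall>lam xs. \<phi> (w + sum_list (ota_run C \<phi> w items)) \<le> lam \<and> okx items xs \<longrightarrow>
       total_value items xs - lam * sum_list xs \<le> total_value items (ota_run C \<phi> w items) - (P (w + sum_list (ota_run C \<phi> w items)) - P w)) \<and>
    (w + sum_list (ota_run C \<phi> w items) < \<beta> \<longrightarrow>
       (\<forall>xs. okx items xs \<longrightarrow> total_value items xs \<le> total_value items (ota_run C \<phi> w items)))"
  using assms
proof (induction items arbitrary: w)
  case Nil
  then show ?case by (simp add: okx_def total_value_def)
next
  case (Cons it its)
  obtain D g where it: "it = (D, g)" by (cases it)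
  have A: "assumption_A L U (D, g)" using Cons.prems it by (simp add: valid_instance_def)
  have vi: "valid_instance L U its" using Cons.prems by (simp add: valid_instance_def)
  define y where "y = ota_choice C \<phi> w (D, g)"
  have yb: "0 \<le> y" "y \<le> D" "w + y \<le> C"
    using choice(1)[OF A Cons.prems(2,3)] unfolding y_def[symmetric] argmax_iff[OF Cons.prems(2)] by auto
  define rs where "rs = ota_run C \<phi> (w + y) its"
  have run: "ota_run C \<phi> w (it # its) = y # rs" by (simp add: it y_def rs_def Let_def)
  define W where "W = w + y + sum_list rs"
  have W: "w + sum_list (ota_run C \<phi> w (it # its)) = W" unfolding run by (simp add: W_def)
  have IH: "w + y \<le> W \<and> W \<le> C \<and>
    (\<forall>lam xs. \<phi> W \<le> lam \<and> okx its xs \<longrightarrow>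
       total_value its xs - lam * sum_list xs \<le> total_value its rs - (P W - P (w + y))) \<and>
    (W < \<beta> \<longrightarrow> (\<forall>xs. okx its xs \<longrightarrow> total_value its xs \<le> total_value its rs))"
    using Cons.IH[OF vi, of "w + y"] yb Cons.prems by (simp add: rs_def W_def)
  have tvr: "total_value (it # its) (ota_run C \<phi> w (it # its)) = g y + total_value its rs"
    unfolding run unfolding it by (simp add: tv_cons)
  have part2: "total_value (it # its) xs - lam * sum_list xs \<le> total_value (it # its) (ota_run C \<phi> w (it # its)) - (P W - P w)"
    if lam: "\<phi> W \<le> lam" and ok: "okx (it # its) xs" for lam xs
  proof -
    obtain x xs' where xs: "xs = x # xs'" "0 \<le> x" "x \<le> D" "okx its xs'"
      using ok unfolding it okx_cons by auto
    have l1: "\<phi> (w + y) \<le> lam" using phi_mono[of "w + y" W] IH lam by simp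
    have "g x - lam * x \<le> g y - (P (w + y) - P w)"
      using pi1[OF A Cons.prems(2,3) y_def l1 xs(2,3)] .
    moreover have "total_value its xs' - lam * sum_list xs' \<le> total_value its rs - (P W - P (w + y))"
      using IH lam xs(4) by blast
    moreover have e1: "total_value (it # its) xs = g x + total_value its xs'" by (simp add: xs(1) it tv_cons)
    moreover have e2: "sum_list xs = x + sum_list xs'" by (simp add: xs(1))
    ultimately show ?thesis unfolding e1 e2 tvr distrib_left by linarith
  qed
  have part3: "total_value (it # its) xs \<le> total_value (it # its) (ota_run C \<phi> w (it # its))"
    if lt: "W < \<beta>" and ok: "okx (it # its) xs" for xs
  proof -
    obtain x xs' where xs: "xs = x # xs'" "0 \<le> x" "x \<le> D" "okx its xs'"
      using ok unfolding it okx_cons by auto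
    have "w + y < \<beta>" using IH lt by simp
    then have yD: "y = D" using pi2[OF A Cons.prems(2,3) y_def] by simp
    have "g x \<le> g y" using g_slope(1)[OF A xs(2) xs(3)] Lpos xs yD
      by (smt (verit) mult_nonneg_nonneg)
    moreover have "total_value its xs' \<le> total_value its rs" using IH lt xs(4) by blast
    moreover have e1: "total_value (it # its) xs = g x + total_value its xs'" by (simp add: xs(1) it tv_cons)
    ultimately show ?thesis unfolding e1 tvr by linarith
  qed
  have "w \<le> W" using IH yb by linarith
  then show ?case unfolding W using IH yb part2 part3 by (simp only: tvr) blast
qed

lemma tv_zero: "valid_instance L U items \<Longrightarrow> total_value items (replicate (length items) 0) = 0"
proof (induction items)
  case Nil then show ?case by (simp add: total_value_def)
next
  case (Cons it its)
  obtain D g where it: "it = (D, g)" by (cases it)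
  have "g 0 = 0" using Cons.prems it by (simp add: valid_instance_def assumption_A_def)
  moreover have "total_value its (replicate (length its) 0) = 0"
    using Cons by (simp add: valid_instance_def)
  ultimately show ?case by (simp add: it tv_cons)
qed

lemma okx_zero: "valid_instance L U items \<Longrightarrow> okx items (replicate (length items) 0)"
proof -
  assume vi: "valid_instance L U items"
  have "0 \<le> fst (items ! i)" if "i < length items" for i
  proof -
    have "assumption_A L U (items ! i)" using vi nth_mem[OF that] by (simp add: valid_instance_def)
    then show ?thesis by (simp add: assumption_A_def Let_def)
  qed
  then show ?thesis by (simp add: okx_def)
qed

lemma feas_okx: "feasible_alloc C items ys \<Longrightarrow> okx items ys"
  by (simp add: feasible_alloc_def okx_def)

lemma exp_strict: "s > 0 \<Longrightarrow> 1 + s < exp (s::real)"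
proof -
  assume s: "s > 0"
  have "1 + s / 2 \<le> exp (s / 2)" by (rule exp_ge_add_one_self)
  then have "(1 + s / 2)^2 \<le> exp (s / 2) ^ 2" using s by (intro power_mono) auto
  also have "exp (s / 2) ^ 2 = exp s" by (simp add: power2_eq_square flip: exp_add)
  finally have e: "(1 + s / 2)^2 \<le> exp s" .
  have "0 < s * s / 4" using s by simp
  moreover have "(1 + s / 2)^2 = 1 + s + s * s / 4" by (simp add: power2_eq_square algebra_simps)
  ultimately show ?thesis using e by linarith
qed

lemma upper:
  assumes vi: "valid_instance L U items"
  shows "OPT C items \<le> \<alpha> * ALG_OTA C \<phi> items \<and> 0 \<le> OPT C items \<and> 0 \<le> ALG_OTA C \<phi> items"
proof -
  define rs where "rs = ota_run C \<phi> 0 items"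
  define W where "W = sum_list rs"
  define A where "A = ALG_OTA C \<phi> items"
  have Aeq: "A = total_value items rs" by (simp add: A_def ALG_OTA_def rs_def)
  have M: "0 \<le> W \<and> W \<le> C \<and>
    (\<forall>lam xs. \<phi> W \<le> lam \<and> okx items xs \<longrightarrow>
       total_value items xs - lam * sum_list xs \<le> A - (P W - P 0)) \<and>
    (W < \<beta> \<longrightarrow> (\<forall>xs. okx items xs \<longrightarrow> total_value items xs \<le> A))"
    using run_main[OF vi, of 0] Cpos by (simp add: rs_def W_def Aeq)
  have "total_value items (replicate (length items) 0) - \<phi> W * sum_list (replicate (length items) (0::real)) \<le> A - (P W - P 0)"
    using M okx_zero[OF vi] by blast
  then have AP: "P W \<le> A" using tv_zero[OF vi] P_zero by (simp add: sum_list_replicate)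
  have "\<phi> 0 * (W - 0) \<le> P W - P 0" using P_diff_bounds[of 0 W] M by simp
  moreover have "0 \<le> \<phi> 0 * W" using M phi_ge_L[of 0] Lpos by (intro mult_nonneg_nonneg) auto
  ultimately have "0 \<le> P W" using P_zero by simp
  then have A0: "0 \<le> A" using AP by simp
  have bound: "total_value items ys \<le> \<alpha> * A" if f: "feasible_alloc C items ys" for ys
  proof (cases "W < \<beta>")
    case True
    then have "total_value items ys \<le> A" using M feas_okx[OF f] by blast
    also have "A \<le> \<alpha> * A" using al_ge1 A0 by (simp add: mult_le_cancel_right1)
    finally show ?thesis .
  next
    case False
    have sC: "sum_list ys \<le> C" using f by (simp add: feasible_alloc_def)
    have t1: "total_value items ys - \<phi> W * sum_list ys \<le> A - P W"
      using M feas_okx[OF f] P_zero by auto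
    have "\<phi> W * sum_list ys \<le> \<phi> W * C" using sC phi_ge_L[of W] Lpos by (intro mult_left_mono) auto
    moreover have PW: "P W = \<beta> * \<phi> W" using False by (simp add: P_above)
    moreover have "(\<alpha> - 1) * (\<beta> * \<phi> W) \<le> (\<alpha> - 1) * A"
      using AP PW al_ge1 by (intro mult_left_mono) auto
    moreover have "(\<alpha> - 1) * (\<beta> * \<phi> W) = \<phi> W * C - \<beta> * \<phi> W"
      using al_be by (simp add: algebra_simps)
    moreover have "(\<alpha> - 1) * A = \<alpha> * A - A" by (simp add: algebra_simps)
    ultimately show ?thesis using t1 by linarith
  qed
  define S where "S = {total_value items ys | ys. feasible_alloc C items ys}"
  have z: "0 \<in> S" unfolding S_def using tv_zero[OF vi] okx_zero[OF vi] Cpos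
    by (auto simp: feasible_alloc_def okx_def sum_list_replicate intro!: exI[of _ "replicate (length items) 0"])
  have ub: "\<And>x. x \<in> S \<Longrightarrow> x \<le> \<alpha> * A" unfolding S_def using bound by auto
  have "Sup S \<le> \<alpha> * A" using z ub by (intro cSup_least) auto
  moreover have "0 \<le> Sup S" using z ub by (intro cSup_upper) (auto simp: bdd_above_def)
  ultimately show ?thesis using A0 by (simp add: OPT_def S_def A_def)
qed

lemma ratio_le: "valid_instance L U items \<Longrightarrow> ereal (OPT C items) / ereal (ALG_OTA C \<phi> items) \<le> ereal \<alpha>"
proof -
  assume vi: "valid_instance L U items"
  note u = upper[OF vi]
  show ?thesis
  proof (cases "ALG_OTA C \<phi> items = 0")
    case True
    then have "OPT C items = 0" using u by simp
    then show ?thesis using True al_pos by (simp add: ereal_divide)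
  next
    case False
    then have pos: "ALG_OTA C \<phi> items > 0" using u by simp
    then have "OPT C items / ALG_OTA C \<phi> items \<le> \<alpha>" using u by (simp add: pos_divide_le_eq)
    then show ?thesis using False by (simp add: ereal_divide)
  qed
qed

definition "inst1 = [(C, \<lambda>y::real. L * y)]"

lemma inst1_valid: "valid_instance L U inst1"
proof -
  have "concave_on {0..C} (\<lambda>y. L * y)"
    unfolding concave_on_def convex_on_def
  proof (intro conjI ballI allI impI)
    show "convex {0..C}" by (rule convex_real_interval)
    fix x y u v :: real assume "u + v = 1"
    show "- (L * (u *\<^sub>R x + v *\<^sub>R y)) \<le> u * - (L * x) + v * - (L * y)"
      by (simp add: algebra_simps)
  qed
  moreover have "mono_on {0..C} (\<lambda>y. L * y)" using Lpos by (intro mono_onI) (simp add: mult_left_mono)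
  moreover have "\<forall>y\<in>{0..C}. ((\<lambda>y. L * y) has_real_derivative L) (at y within {0..C}) \<and> L \<le> L \<and> L \<le> U"
    using LU by (auto intro!: derivative_eq_intros)
  ultimately show ?thesis using Cpos
    unfolding valid_instance_def inst1_def assumption_A_def Let_def
    by (auto intro!: exI[of _ "\<lambda>_. L"])
qed

lemma inst1_choice: "ota_choice C \<phi> 0 (C, \<lambda>y. L * y) = \<beta>"
proof -
  have A: "assumption_A L U (C, \<lambda>y. L * y)" using inst1_valid by (simp add: inst1_def valid_instance_def)
  define y where "y = ota_choice C \<phi> 0 (C, \<lambda>y. L * y)"
  have am: "ota_argmax C \<phi> 0 (C, \<lambda>y. L * y) y" using choice(1)[OF A] Cpos by (simp add: y_def)
  have nonpos: "L * z - P z \<le> 0" if "0 \<le> z" for z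
    using P_diff_bounds[of 0 z] that P_zero phi_below[of 0] be_pos by simp
  have amb: "ota_argmax C \<phi> 0 (C, \<lambda>y. L * y) \<beta>"
    unfolding argmax_iff[OF order_refl] using be_pos be_le_C nonpos P_below[of \<beta>] P_zero by auto
  then have "\<beta> \<le> y" using choice(2)[OF A] Cpos by (simp add: y_def)
  moreover have "\<not> y > \<beta>"
  proof
    assume gt: "y > \<beta>"
    define s where "s = \<alpha> * y / C - 1"
    have "\<alpha> * \<beta> < \<alpha> * y" using al_pos gt by simp
    then have "C < \<alpha> * y" using al_be by simp
    then have "s > 0" using Cpos by (simp add: s_def field_simps)
    then have "1 + s < exp s" by (rule exp_strict)
    then have "\<beta> * (1 + s) < \<beta> * exp s" using be_pos by simp
    moreover have "\<beta> * (1 + s) = y" using al_be Cpos by (simp add: s_def field_simps)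
    ultimately have "y < \<beta> * exp s" by simp
    then have "L * y < L * (\<beta> * exp s)" using Lpos by simp
    moreover have "P y = \<beta> * (L * exp s)" using gt by (simp add: P_above phi_above s_def)
    ultimately have "L * y - P y < 0" by (simp add: algebra_simps)
    moreover have "L * \<beta> - P \<beta> \<le> L * y - P y"
      using am be_pos be_le_C unfolding argmax_iff[OF order_refl] P_zero by auto
    moreover have "L * \<beta> - P \<beta> = 0" using P_below[of \<beta>] by simp
    ultimately show False by simp
  qed
  ultimately show ?thesis by (simp add: y_def)
qed

lemma inst1_ratio: "ereal (OPT C inst1) / ereal (ALG_OTA C \<phi> inst1) = ereal \<alpha>"
proof -
  have alg: "ALG_OTA C \<phi> inst1 = L * \<beta>"
    by (simp add: ALG_OTA_def inst1_def inst1_choice total_value_def)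
  have "{total_value inst1 ys | ys. feasible_alloc C inst1 ys} = (\<lambda>y. L * y) ` {0..C}"
  proof (intro set_eqI iffI)
    fix v assume "v \<in> {total_value inst1 ys | ys. feasible_alloc C inst1 ys}"
    then obtain ys where ys: "v = total_value inst1 ys" "feasible_alloc C inst1 ys" by auto
    then obtain y where "ys = [y]" by (cases ys) (auto simp: feasible_alloc_def inst1_def)
    then show "v \<in> (\<lambda>y. L * y) ` {0..C}" using ys by (auto simp: feasible_alloc_def inst1_def total_value_def)
  next
    fix v assume "v \<in> (\<lambda>y. L * y) ` {0..C}"
    then obtain y where "v = L * y" "y \<in> {0..C}" by blast
    then show "v \<in> {total_value inst1 ys | ys. feasible_alloc C inst1 ys}"
      by (auto simp: feasible_alloc_def inst1_def total_value_def intro!: exI[of _ "[y]"])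
  qed
  then have "OPT C inst1 = Sup ((\<lambda>y. L * y) ` {0..C})" by (simp add: OPT_def)
  also have "\<dots> = L * C"
    using Cpos Lpos by (intro cSup_eq_maximum) (auto intro: mult_left_mono)
  finally have opt: "OPT C inst1 = L * C" .
  have q: "L * C / (L * \<beta>) = \<alpha>" 
  proof -
    have "L * C / (L * \<beta>) = C / \<beta>" by (rule mult_divide_mult_cancel_left) (use Lpos in simp)
    also have "C / \<beta> = \<alpha> * \<beta> / \<beta>" using al_be by simp
    also have "\<dots> = \<alpha>" using be_pos by simp
    finally show ?thesis .
  qed
  have ne: "L * \<beta> \<noteq> 0" using Lpos be_pos by simp
  have "ereal (L * C) / ereal (L * \<beta>) = ereal (L * C / (L * \<beta>))"
    by (rule trans[OF ereal_divide if_not_P[OF ne]])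
  then show ?thesis unfolding opt alg q .
qed

lemma main: "competitive_ratio_OTA C L U \<phi> = ereal \<alpha>"
proof (rule antisym)
  show "competitive_ratio_OTA C L U \<phi> \<le> ereal \<alpha>"
    unfolding competitive_ratio_OTA_def by (rule SUP_least) (use ratio_le in auto)
  have "ereal \<alpha> = ereal (OPT C inst1) / ereal (ALG_OTA C \<phi> inst1)" using inst1_ratio by simp
  also have "\<dots> \<le> competitive_ratio_OTA C L U \<phi>"
    unfolding competitive_ratio_OTA_def by (rule SUP_upper) (use inst1_valid in auto)
  finally show "ereal \<alpha> \<le> competitive_ratio_OTA C L U \<phi>" .
qed

end

theorem theorem1:
  fixes C L U :: real
  assumes "C > 0" and "0 < L" and "L \<le> U"
  shows "competitive_ratio_OTA C L U (phi_star C L U) = ereal (1 + ln (U / L))"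
proof -
  interpret got C L U using assms by unfold_locales
  show ?thesis using main by (simp add: al_def)
qed

end
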